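(* Under the standing assumptions, writing (R2) for the condition $\mathscr{R}(CC^*B^* )=\mathscr{R}(B^* )$, the following hold. (41) $\{M^{(1,2,4)}\}\subseteq\{C^{-1}B^{(1)}A^{-1}\}$; and $\{M^{(1,2,4)}\}\supseteq\{C^{-1}B^{(1)}A^{-1}\}\Leftrightarrow\{M^{(1,2,4)}\}=\{C^{-1}B^{(1)}A^{-1}\}\Leftrightarrow r(B)=n$. (42) $\{M^{(1,2,4)}\}\subseteq\{C^{-1}B^{(1,2)}A^{-1}\}$; and $\{M^{(1,2,4)}\}\supseteq\{C^{-1}B^{(1,2)}A^{-1}\}\Leftrightarrow\{M^{(1,2,4)}\}=\{C^{-1}B^{(1,2)}A^{-1}\}\Leftrightarrow B=0$ or $r(B)=n$. (43) $\{M^{(1,2,4)}\}\cap\{C^{-1}B^{(1,3)}A^{-1}\}\neq\emptyset$; $\{M^{(1,2,4)}\}\supseteq\{C^{-1}B^{(1,3)}A^{-1}\}\Leftrightarrow r(B)=n$; $\{M^{(1,2,4)}\}\subseteq\{C^{-1}B^{(1,3)}A^{-1}\}\Leftrightarrow B=0$ or $r(B)=m$; $\{M^{(1,2,4)}\}=\{C^{-1}B^{(1,3)}A^{-1}\}\Leftrightarrow r(B)=m=n$. (44) $\{M^{(1,2,4)}\}\cap\{C^{-1}B^{(1,4)}A^{-1}\}\neq\emptyset\Leftrightarrow\{M^{(1,2,4)}\}\subseteq\{C^{-1}B^{(1,4)}A^{-1}\}\Leftrightarrow$ (R2); and $\{M^{(1,2,4)}\}\supseteq\{C^{-1}B^{(1,4)}A^{-1}\}\Leftrightarrow\{M^{(1,2,4)}\}=\{C^{-1}B^{(1,4)}A^{-1}\}\Leftrightarrow$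 (R2) and $r(B)=\min\{m,n\}$. (45) $\{M^{(1,2,4)}\}\cap\{C^{-1}B^{(1,2,3)}A^{-1}\}\neq\emptyset$; $\{M^{(1,2,4)}\}\supseteq\{C^{-1}B^{(1,2,3)}A^{-1}\}\Leftrightarrow B=0$ or $r(B)=n$; $\{M^{(1,2,4)}\}\subseteq\{C^{-1}B^{(1,2,3)}A^{-1}\}\Leftrightarrow B=0$ or $r(B)=m$; $\{M^{(1,2,4)}\}=\{C^{-1}B^{(1,2,3)}A^{-1}\}\Leftrightarrow B=0$ or $r(B)=m=n$. (46) $\{M^{(1,2,4)}\}\cap\{C^{-1}B^{(1,2,4)}A^{-1}\}\neq\emptyset\Leftrightarrow\{M^{(1,2,4)}\}=\{C^{-1}B^{(1,2,4)}A^{-1}\}\Leftrightarrow$ (R2). (47) $\{M^{(1,2,4)}\}\cap\{C^{-1}B^{(1,3,4)}A^{-1}\}\neq\emptyset\Leftrightarrow$ (R2); $\{M^{(1,2,4)}\}\supseteq\{C^{-1}B^{(1,3,4)}A^{-1}\}\Leftrightarrow$ (R2) and $r(B)=\min\{m,n\}$; $\{M^{(1,2,4)}\}\subseteq\{C^{-1}B^{(1,3,4)}A^{-1}\}\Leftrightarrow B=0$ or ((R2) and $r(B)=m$); $\{M^{(1,2,4)}\}=\{C^{-1}B^{(1,3,4)}A^{-1}\}\Leftrightarrow$ (R2) and $r(B)=m$. (48) $C^{-1}B^\dagger A^{-1}\in\{M^{(1,2,4)}\}\Leftrightarrow$ (R2).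
   Context: Standing assumptions: $m,n\ge1$; $A\in\mathbb{C}^{m\times m}$ and $C\in\mathbb{C}^{n\times n}$ are nonsingular; $B\in\mathbb{C}^{m\times n}$; $M=ABC$. For a complex matrix $X$, $X^*$ is its conjugate transpose, $r(X)$ its rank and $\mathscr{R}(X)$ its column space. For $X\in\mathbb{C}^{p\times q}$, a matrix $G\in\mathbb{C}^{q\times p}$ is called an $\{i,\ldots,j\}$-generalized inverse of $X$ (written $X^{(i,\ldots,j)}$) if it satisfies the equations numbered $i,\ldots,j$ among the four Penrose equations (i) $XGX=X$, (ii) $GXG=G$, (iii) $(XG)^*=XG$, (iv) $(GX)^*=GX$; $\{X^{(i,\ldots,j)}\}$ denotes the set of all such $G$. The Moore–Penrose inverse $X^\dagger$ is the unique matrix satisfying all four equations. For a type $(k,\ldots,l)$, $\{C^{-1}B^{(k,\ldots,l)}A^{-1}\}:=\{C^{-1}GA^{-1}: G\in\{B^{(k,\ldots,l)}\}\}$. *)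

theory Defs
  imports "HOL-Analysis.Analysis"
begin

text \<open>Complex matrices are represented as \<open>complex^'n^'m\<close> (m rows, n columns);
  m = CARD('m), n = CARD('n).\<close>

definition cstar :: "complex^'n^'m \<Rightarrow> complex^'m^'n" where
  "cstar X = (\<chi> i j. cnj (X $ j $ i))"

definition colspace :: "complex^'n^'m \<Rightarrow> (complex^'m) set" where
  "colspace X = range (\<lambda>x. X *v x)"

definition gen_inv :: "nat set \<Rightarrow> complex^'n^'m \<Rightarrow> (complex^'m^'n) set" where
  "gen_inv S X = {G.
     (1 \<in> S \<longrightarrow> X ** G ** X = X) \<and>
     (2 \<in> S \<longrightarrow> G ** X ** G = G) \<and>
     (3 \<in> S \<longrightarrow> cstar (X ** G) = X ** G) \<and>
     (4 \<in> S \<longrightarrow> cstar (G ** X) = G ** X)}"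

definition moore_penrose :: "complex^'n^'m \<Rightarrow> complex^'m^'n" where
  "moore_penrose X = (THE G. G \<in> gen_inv {1,2,3,4} X)"

definition tri_set :: "complex^'m^'m \<Rightarrow> nat set \<Rightarrow> complex^'n^'m \<Rightarrow> complex^'n^'n \<Rightarrow> (complex^'m^'n) set" where
  "tri_set A S B C = (\<lambda>G. matrix_inv C ** G ** matrix_inv A) ` gen_inv S B"

end

theory Submission
  imports Defs
begin

lemma minv:
  fixes A :: "'a::semiring_1^'n^'m"
  assumes "invertible A"
  shows "A ** matrix_inv A = mat 1" "matrix_inv A ** A = mat 1"
proof -
  have "A ** matrix_inv A = mat 1 \<and> matrix_inv A ** A = mat 1"
    using assms unfolding invertible_def matrix_inv_def by (rule someI_ex)
  then show "A ** matrix_inv A = mat 1" "matrix_inv A ** A = mat 1" by auto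
qed

lemma cstar_cstar[simp]: "cstar (cstar X) = X"
  by (simp add: cstar_def vec_eq_iff)

lemma cstar_mult: "cstar (X ** Y) = cstar Y ** cstar X"
  by (simp add: cstar_def matrix_matrix_mult_def vec_eq_iff mult.commute)

lemma cstar_add: "cstar (X + Y) = cstar X + cstar Y"
  by (simp add: cstar_def vec_eq_iff)

lemma cstar_diff: "cstar (X - Y) = cstar X - cstar Y"
  by (simp add: cstar_def vec_eq_iff)

lemma cstar_0[simp]: "cstar 0 = 0"
  by (simp add: cstar_def vec_eq_iff)

lemma cstar_1[simp]: "cstar (mat 1) = mat 1"
  by (simp add: cstar_def vec_eq_iff mat_def)

lemma cstar_eq0: "cstar X = 0 \<longleftrightarrow> X = 0"
  by (metis cstar_0 cstar_cstar)

lemma cstar_cancel: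
  fixes X :: "complex^'n^'m"
  assumes "cstar X ** X = 0"
  shows "X = 0"
proof -
  have "X $ i $ j = 0" for i j
  proof -
    have "(cstar X ** X) $ j $ j = (\<Sum>k\<in>UNIV. cnj (X$k$j) * X$k$j)"
      by (simp add: cstar_def matrix_matrix_mult_def)
    also have "\<dots> = of_real (\<Sum>k\<in>UNIV. (Re (X$k$j))^2 + (Im (X$k$j))^2)"
      by (simp only: of_real_sum mult.commute[of "cnj _"] complex_mult_cnj)
    finally have h: "(cstar X ** X) $ j $ j = of_real (\<Sum>k\<in>UNIV. (Re (X$k$j))^2 + (Im (X$k$j))^2)" .
    have "complex_of_real (\<Sum>k\<in>UNIV. (Re (X$k$j))^2 + (Im (X$k$j))^2) = 0"
      by (metis h assms zero_index)
    then have "(\<Sum>k\<in>UNIV. (Re (X$k$j))^2 + (Im (X$k$j))^2) = 0"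
      by (simp only: of_real_eq_0_iff)
    then have "(Re (X$i$j))^2 + (Im (X$i$j))^2 = 0"
      by (subst (asm) sum_nonneg_eq_0_iff) auto
    then have "Re (X$i$j) = 0" "Im (X$i$j) = 0"
      by (smt (verit) zero_le_power2 power2_eq_square mult_eq_0_iff)+
    then show ?thesis by (simp add: complex_eq_iff)
  qed
  then show ?thesis by (simp add: vec_eq_iff)
qed

lemma cancel_right:
  fixes X :: "complex^'n^'m" and Y :: "complex^'n^'k"
  assumes "Y ** cstar X ** X = 0"
  shows "Y ** cstar X = 0"
proof -
  have "cstar (cstar (Y ** cstar X)) ** cstar (Y ** cstar X) = (Y ** cstar X ** X) ** cstar Y"
    by (simp add: cstar_mult matrix_mul_assoc)
  also have "\<dots> = 0" using assms by simp
  finally have "cstar (Y ** cstar X) = 0" using cstar_cancel by blast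
  then show ?thesis by (simp add: cstar_eq0)
qed

lemma cancel_left:
  fixes X :: "complex^'n^'m" and Y :: "complex^'k^'n"
  assumes "cstar X ** X ** Y = 0"
  shows "X ** Y = 0"
proof -
  have "cstar (X ** Y) ** (X ** Y) = cstar Y ** (cstar X ** X ** Y)"
    by (simp add: cstar_mult matrix_mul_assoc)
  also have "\<dots> = 0" using assms by simp
  finally show ?thesis using cstar_cancel by blast
qed

lemma inv1_exists:
  fixes B :: "'a::field^'n^'m"
  shows "\<exists>G. B ** G ** B = B"
proof -
  obtain g where g: "Vector_Spaces.linear (*s) (*s) g" "\<forall>v\<in>range ((*v) B). B *v (g v) = v"
    using vec.linear_exists_right_inverse_on[OF matrix_vector_mul_linear_gen vec.subspace_UNIV, of B]
    by blast
  have "B ** matrix g ** B = B"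
    unfolding matrix_eq
    using g by (simp add: matrix_vector_mul_assoc[symmetric] matrix_works)
  then show ?thesis by blast
qed


lemma mm_diff_l: "(A::'a::ring_1^'n^'m) ** (B - C) = A ** B - A ** C"
  by (vector matrix_matrix_mult_def sum_subtractf[symmetric] field_simps)

lemma mm_diff_r: "((A::'a::ring_1^'n^'m) - B) ** C = A ** C - B ** C"
  by (vector matrix_matrix_mult_def sum_subtractf[symmetric] field_simps)

lemma mm_add_r: "((A::'a::semiring_1^'n^'m) + B) ** C = A ** C + B ** C"
  by (vector matrix_matrix_mult_def sum.distrib[symmetric] field_simps)

lemma inv13_exists:
  fixes B :: "complex^'n^'m"
  shows "\<exists>X. B ** X ** B = B \<and> cstar (B ** X) = B ** X"
proof -
  obtain Y where Y: "cstar B ** B ** Y ** (cstar B ** B) = cstar B ** B"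
    using inv1_exists by blast
  have "cstar B ** B ** (Y ** (cstar B ** B) - mat 1) = 0"
    using Y by (simp add: mm_diff_l matrix_mul_assoc)
  then have "B ** (Y ** (cstar B ** B) - mat 1) = 0"
    by (rule cancel_left)
  then have BYH: "B ** Y ** (cstar B ** B) = B"
    by (simp add: mm_diff_l matrix_mul_assoc)
  then have cB: "cstar B = cstar B ** B ** cstar Y ** cstar B"
    by (metis cstar_mult cstar_cstar matrix_mul_assoc)
  have eq: "B ** Y ** cstar B = B ** cstar Y ** cstar B"
  proof -
    have "B ** Y ** cstar B = B ** Y ** (cstar B ** B ** cstar Y ** cstar B)"
      using cB by metis
    also have "\<dots> = (B ** Y ** (cstar B ** B)) ** cstar Y ** cstar B"
      by (simp add: matrix_mul_assoc)
    finally show ?thesis using BYH by simp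
  qed
  show ?thesis
    apply (rule exI[of _ "Y ** cstar B"])
    using BYH eq by (simp add: matrix_mul_assoc cstar_mult)
qed

lemma mp_exists:
  fixes B :: "complex^'n^'m"
  shows "\<exists>D. D \<in> gen_inv {1,2,3,4} B"
proof -
  obtain X3 where X3: "B ** X3 ** B = B" "cstar (B ** X3) = B ** X3"
    using inv13_exists by blast
  obtain Z where Z: "cstar B ** Z ** cstar B = cstar B" "cstar (cstar B ** Z) = cstar B ** Z"
    using inv13_exists by blast
  have X4: "B ** cstar Z ** B = B" "cstar (cstar Z ** B) = cstar Z ** B"
    using Z by (metis cstar_mult cstar_cstar matrix_mul_assoc)+
  let ?D = "cstar Z ** B ** X3"
  have "B ** ?D ** B = B" using X3 X4 by (metis matrix_mul_assoc)
  moreover have "?D ** B ** ?D = ?D" using X3 X4 by (metis matrix_mul_assoc)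
  moreover have "cstar (B ** ?D) = B ** ?D" using X3 X4 by (metis matrix_mul_assoc)
  moreover have "cstar (?D ** B) = ?D ** B" using X3 X4 by (metis matrix_mul_assoc)
  ultimately show ?thesis unfolding gen_inv_def by blast
qed

lemma mp_unique:
  fixes B :: "complex^'n^'m"
  assumes "G1 \<in> gen_inv {1,2,3,4} B" "G2 \<in> gen_inv {1,2,3,4} B"
  shows "G1 = G2"
proof -
  have a: "B ** G1 ** B = B" "G1 ** B ** G1 = G1" "cstar (B ** G1) = B ** G1" "cstar (G1 ** B) = G1 ** B"
    using assms(1) unfolding gen_inv_def by auto
  have b: "B ** G2 ** B = B" "G2 ** B ** G2 = G2" "cstar (B ** G2) = B ** G2" "cstar (G2 ** B) = G2 ** B"
    using assms(2) unfolding gen_inv_def by auto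
  have c1: "cstar B = cstar B ** (B ** G2)"
    by (metis b(1) b(3) cstar_mult matrix_mul_assoc)
  have "G1 = G1 ** cstar G1 ** cstar B"
    by (metis a(2) a(3) cstar_mult matrix_mul_assoc)
  also have "\<dots> = G1 ** cstar G1 ** cstar B ** (B ** G2)"
    using c1 by (metis matrix_mul_assoc)
  also have "\<dots> = G1 ** B ** G2"
    by (metis a(2) a(3) cstar_mult matrix_mul_assoc)
  finally have e1: "G1 = G1 ** B ** G2" .
  have c2: "cstar B = G1 ** B ** cstar B"
    by (metis a(1) a(4) cstar_mult matrix_mul_assoc)
  have "G2 = cstar B ** cstar G2 ** G2"
    by (metis b(2) b(4) cstar_mult matrix_mul_assoc)
  also have "\<dots> = G1 ** B ** cstar B ** cstar G2 ** G2"
    using c2 by (metis matrix_mul_assoc)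
  also have "\<dots> = G1 ** B ** G2"
    by (metis b(2) b(4) cstar_mult matrix_mul_assoc)
  finally show ?thesis using e1 by simp
qed

lemma mp_prop:
  fixes B :: "complex^'n^'m"
  shows "moore_penrose B \<in> gen_inv {1,2,3,4} B"
  unfolding moore_penrose_def
  using mp_exists[of B] mp_unique[of _ B] by (metis theI)

lemma herm_eq:
  assumes "P1 ** P2 = P1" "P2 ** P1 = P2" "cstar P1 = P1" "cstar P2 = P2"
  shows "P1 = P2"
  by (metis assms cstar_mult)

lemma exists_JWK:
  fixes J :: "'a::{field}^'k^'i" and K :: "'a^'l^'j"
  assumes "J \<noteq> 0" "K \<noteq> 0"
  shows "\<exists>W. J ** W ** K \<noteq> 0"
proof -
  obtain i k where ik: "J $ i $ k \<noteq> 0" using assms(1) by (metis vec_eq_iff zero_index)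
  obtain j l where jl: "K $ j $ l \<noteq> 0" using assms(2) by (metis vec_eq_iff zero_index)
  let ?W = "(\<chi> a b. if a = k then (if b = j then 1 else 0) else 0) :: 'a^'j^'k"
  have JW: "(J ** ?W) $ i $ b = (if b = j then J $ i $ k else 0)" for b
  proof -
    have "(J ** ?W) $ i $ b = (\<Sum>a\<in>UNIV. J $ i $ a * ?W $ a $ b)"
      by (simp add: matrix_matrix_mult_def)
    also have "\<dots> = (\<Sum>a\<in>UNIV. if a = k then J $ i $ a * (if b = j then 1 else 0) else 0)"
      by (rule sum.cong) auto
    also have "\<dots> = J $ i $ k * (if b = j then 1 else 0)"
      by (simp only: sum.delta finite UNIV_I if_True)
    finally show ?thesis by simp
  qed
  have "(J ** ?W ** K) $ i $ l = (\<Sum>b\<in>UNIV. (J ** ?W) $ i $ b * K $ b $ l)"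
    by (simp add: matrix_matrix_mult_def)
  also have "\<dots> = (\<Sum>b\<in>UNIV. if b = j then J $ i $ k * K $ b $ l else 0)"
    by (rule sum.cong) (auto simp: JW)
  also have "\<dots> = J $ i $ k * K $ j $ l"
    by (simp only: sum.delta finite UNIV_I if_True)
  finally have "(J ** ?W ** K) $ i $ l = J $ i $ k * K $ j $ l" .
  then have "J ** ?W ** K \<noteq> 0" using ik jl by (metis mult_eq_0_iff zero_index)
  then show ?thesis by blast
qed


lemma colspace_le: "X1 = X2 ** Y \<Longrightarrow> colspace X1 \<subseteq> colspace X2"
  unfolding colspace_def by (auto simp: matrix_vector_mul_assoc[symmetric])

lemma colspace_leD: "colspace X1 \<subseteq> colspace X2 \<Longrightarrow> \<exists>y. X1 *v x = X2 *v y"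
  unfolding colspace_def by auto

lemma r2: "A ** B = C \<Longrightarrow> A ** (B ** Y) = C ** Y"
  by (simp add: matrix_mul_assoc)

lemma r3: "A ** (B ** C) = E \<Longrightarrow> A ** (B ** (C ** Y)) = E ** Y"
  by (simp add: matrix_mul_assoc)

lemma ext2: "A ** B = (C::'a::semiring_1^_^_) \<Longrightarrow> X ** A ** B = X ** C"
  by (metis matrix_mul_assoc)

locale core =
  fixes B :: "complex^'n^'m" and C Ci :: "complex^'n^'n"
  assumes CCi: "C ** Ci = mat 1" and CiC: "Ci ** C = mat 1"
begin

definition "Xs = {G. B ** G ** B = B \<and> G ** B ** G = G \<and> cstar (Ci ** G ** B ** C) = Ci ** G ** B ** C}"
definition "D = moore_penrose B"
definition "G0 = C ** moore_penrose (B ** C)"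
definition "P0 = G0 ** B"
definition "LI = (\<exists>L. L ** B = mat 1)"
definition "RI = (\<exists>R. B ** R = mat 1)"

lemma Dp: "B ** D ** B = B" "D ** B ** D = D" "cstar (B ** D) = B ** D" "cstar (D ** B) = D ** B"
  using mp_prop[of B] unfolding gen_inv_def D_def by auto

lemma G0_X: "G0 \<in> Xs"
proof -
  define N where "N = moore_penrose (B ** C)"
  have N: "B ** C ** N ** (B ** C) = B ** C" "N ** (B ** C) ** N = N" "cstar (N ** (B ** C)) = N ** (B ** C)"
    using mp_prop[of "B ** C"] unfolding gen_inv_def N_def by auto
  have "B ** G0 ** B = B ** C ** N ** (B ** C) ** Ci"
    unfolding G0_def N_def[symmetric] by (metis matrix_mul_assoc CCi matrix_mul_rid)
  also have "\<dots> = B" using N(1) by (simp add: matrix_mul_assoc[symmetric] CCi)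
  finally have 1: "B ** G0 ** B = B" .
  have 2: "G0 ** B ** G0 = G0"
    unfolding G0_def N_def[symmetric] using N(2) by (metis matrix_mul_assoc)
  have "Ci ** G0 ** B ** C = N ** (B ** C)"
    unfolding G0_def N_def[symmetric] by (simp add: matrix_mul_assoc CiC)
  then have 3: "cstar (Ci ** G0 ** B ** C) = Ci ** G0 ** B ** C" using N(3) by simp
  show ?thesis using 1 2 3 unfolding Xs_def by blast
qed

lemma XsD: assumes "G \<in> Xs" shows "B ** G ** B = B" "G ** B ** G = G"
  "cstar (Ci ** G ** B ** C) = Ci ** G ** B ** C"
  using assms unfolding Xs_def by auto

lemma sameP:
  assumes "G1 \<in> Xs" "G2 \<in> Xs"
  shows "G1 ** B = G2 ** B"
proof -
  have q: "(Ci ** G1 ** B ** C) ** (Ci ** G2 ** B ** C) = Ci ** G1 ** B ** C"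
    if "G1 \<in> Xs" "G2 \<in> Xs" for G1 G2
  proof -
    have "(Ci ** G1 ** B ** C) ** (Ci ** G2 ** B ** C) = Ci ** G1 ** (B ** (C ** Ci) ** G2 ** B) ** C"
      by (simp add: matrix_mul_assoc)
    also have "\<dots> = Ci ** G1 ** B ** C" using XsD(1)[OF that(2)] by (simp add: CCi)
    finally show ?thesis .
  qed
  have "Ci ** G1 ** B ** C = Ci ** G2 ** B ** C"
    by (rule herm_eq[OF q q]) (use assms XsD(3) in auto)
  then have "C ** (Ci ** G1 ** B ** C) ** Ci = C ** (Ci ** G2 ** B ** C) ** Ci" by simp
  then show ?thesis by (metis matrix_mul_assoc CCi matrix_mul_rid CiC matrix_mul_lid)
qed

lemma XB: "G \<in> Xs \<Longrightarrow> G ** B = P0"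
  unfolding P0_def using sameP G0_X by blast

lemma P0_idem: "P0 ** P0 = P0" "B ** P0 = B"
  unfolding P0_def using XsD(1)[OF G0_X] by (metis matrix_mul_assoc)+

lemma Xs_iff: "G \<in> Xs \<longleftrightarrow> B ** G ** B = B \<and> G ** B ** G = G \<and> G ** B = P0"
proof
  assume "G \<in> Xs" then show "B ** G ** B = B \<and> G ** B ** G = G \<and> G ** B = P0"
    using XsD XB by blast
next
  assume a: "B ** G ** B = B \<and> G ** B ** G = G \<and> G ** B = P0"
  have "Ci ** G ** B ** C = Ci ** G0 ** B ** C"
    using a unfolding P0_def by (metis matrix_mul_assoc)
  then show "G \<in> Xs" using a XsD(3)[OF G0_X] unfolding Xs_def by auto
qed

lemma B1herm:
  assumes "B ** G ** B = B" "cstar (G ** B) = G ** B" "cstar P0 = P0"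
  shows "G ** B = P0"
proof (rule herm_eq)
  show "G ** B ** P0 = G ** B" unfolding P0_def using XsD(1)[OF G0_X] by (metis matrix_mul_assoc)
  show "P0 ** (G ** B) = P0" unfolding P0_def using assms(1) by (metis matrix_mul_assoc)
qed (use assms in auto)

definition "G1 = P0 ** D"

lemma G1p: "B ** G1 = B ** D" "G1 ** B = P0" "G1 \<in> Xs" "B ** G1 ** B = B" "cstar (B ** G1) = B ** G1"
proof -
  show a: "B ** G1 = B ** D" unfolding G1_def using P0_idem by (metis matrix_mul_assoc)
  show b: "G1 ** B = P0" unfolding G1_def P0_def using Dp(1) XsD(1)[OF G0_X] by (metis matrix_mul_assoc)
  show c: "B ** G1 ** B = B" using a Dp(1) by simp
  have "G1 ** B ** G1 = G1" using b unfolding G1_def using P0_idem by (metis matrix_mul_assoc)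
  then show "G1 \<in> Xs" using b c Xs_iff by blast
  show "cstar (B ** G1) = B ** G1" using a Dp(3) by simp
qed

lemma nLI1: "\<not> LI \<Longrightarrow> mat 1 - P0 \<noteq> 0"
proof
  assume "\<not> LI" "mat 1 - P0 = 0"
  then have "G0 ** B = mat 1" unfolding P0_def by simp
  then show False using \<open>\<not> LI\<close> unfolding LI_def by blast
qed

lemma nLI2: "\<not> LI \<Longrightarrow> mat 1 - D ** B \<noteq> 0"
proof
  assume "\<not> LI" "mat 1 - D ** B = 0"
  then have "D ** B = mat 1" by simp
  then show False using \<open>\<not> LI\<close> unfolding LI_def by blast
qed

lemma nRI: "\<not> RI \<Longrightarrow> mat 1 - B ** D \<noteq> 0"
proof
  assume "\<not> RI" "mat 1 - B ** D = 0"
  then have "B ** D = mat 1" by simp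
  then show False using \<open>\<not> RI\<close> unfolding RI_def by blast
qed

lemma LI_X: assumes "LI" "B ** G ** B = B" shows "G \<in> Xs"
proof -
  obtain L where L: "L ** B = mat 1" using assms(1) LI_def by blast
  have GB: "G ** B = mat 1"
  proof -
    have "G ** B = L ** B ** (G ** B)" using L by simp
    also have "\<dots> = L ** (B ** G ** B)" by (simp add: matrix_mul_assoc)
    finally show ?thesis using L assms(2) by simp
  qed
  have "G0 ** B = mat 1"
  proof -
    have "G0 ** B = L ** B ** (G0 ** B)" using L by simp
    also have "\<dots> = L ** (B ** G0 ** B)" by (simp add: matrix_mul_assoc)
    finally show ?thesis using L XsD(1)[OF G0_X] by simp
  qed
  then show ?thesis using GB assms(2) unfolding Xs_iff P0_def by simp
qed

lemma RI_1: assumes "RI" "B ** G ** B = B" shows "B ** G = mat 1"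
proof -
  obtain R where R: "B ** R = mat 1" using assms(1) RI_def by blast
  have "B ** G = B ** G ** (B ** R)" using R by simp
  also have "\<dots> = (B ** G ** B) ** R" by (simp add: matrix_mul_assoc)
  finally show ?thesis using R assms(2) by simp
qed

lemma B0_X: "B = 0 \<Longrightarrow> Xs = {0}"
  unfolding Xs_def by auto


lemma Dpr: "B ** (D ** B) = B" "D ** (B ** D) = D"
  using Dp by (simp_all add: matrix_mul_assoc)

lemma E2: assumes "\<not> LI" "B \<noteq> 0"
  shows "\<exists>H. B ** H ** B = B \<and> cstar (B ** H) = B ** H \<and> H ** B \<noteq> P0"
proof -
  obtain W where W: "(mat 1 - P0) ** W ** B \<noteq> 0" using exists_JWK nLI1 assms by blast
  have BK: "B ** (mat 1 - P0) = 0" using P0_idem(2) by (simp add: mm_diff_l)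
  let ?H = "G1 + (mat 1 - P0) ** W"
  have BH: "B ** ?H = B ** G1"
    by (simp add: matrix_add_ldistrib matrix_mul_assoc BK)
  have HB: "?H ** B = P0 + (mat 1 - P0) ** W ** B"
    by (simp add: mm_add_r G1p(2))
  have 1: "B ** ?H ** B = B" using BH G1p(4) by simp
  have 2: "cstar (B ** ?H) = B ** ?H" using BH G1p(5) by simp
  have 3: "?H ** B \<noteq> P0" using HB W by simp
  show ?thesis using 1 2 3 by blast
qed

lemma E2': assumes "\<not> LI" "B \<noteq> 0"
  shows "\<exists>H. B ** H ** B = B \<and> H ** B ** H = H \<and> cstar (B ** H) = B ** H \<and> H ** B \<noteq> P0"
proof -
  obtain H where H: "B ** H ** B = B" "cstar (B ** H) = B ** H" "H ** B \<noteq> P0"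
    using E2 assms by blast
  have Hr: "B ** (H ** B) = B" using H(1) by (simp add: matrix_mul_assoc)
  have "B ** (H ** B ** H) ** B = B" by (simp add: matrix_mul_assoc[symmetric] Hr r3[OF Hr])
  moreover have "(H ** B ** H) ** B ** (H ** B ** H) = H ** B ** H"
    by (simp add: matrix_mul_assoc[symmetric] Hr r3[OF Hr])
  moreover have "B ** (H ** B ** H) = B ** H" by (simp add: matrix_mul_assoc[symmetric] Hr r3[OF Hr])
  moreover have "(H ** B ** H) ** B = H ** B" by (simp add: matrix_mul_assoc[symmetric] Hr r3[OF Hr])
  ultimately show ?thesis using H by metis
qed

lemma E3: assumes "\<not> RI" "B \<noteq> 0"
  shows "\<exists>G\<in>Xs. cstar (B ** G) \<noteq> B ** G"
proof -
  let ?E = "mat 1 - B ** D"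
  have BD0: "B ** D \<noteq> 0" using assms(2) Dp(1) by auto
  obtain Z where Z: "B ** D ** Z ** ?E \<noteq> 0" using exists_JWK[OF BD0 nRI[OF assms(1)]] by blast
  have EB: "?E ** B = 0" using Dp(1) by (simp add: mm_diff_r)
  have BDBD: "B ** D ** (B ** D) = B ** D" using Dp(1) by (simp add: matrix_mul_assoc)
  have BDE: "B ** D ** ?E = 0" using BDBD by (simp add: mm_diff_l)
  have Eh: "cstar ?E = ?E" using Dp(3) by (simp add: cstar_diff)
  let ?G = "G1 + G1 ** Z ** ?E"
  have GB: "?G ** B = P0"
  proof -
    have "?G ** B = G1 ** B + G1 ** Z ** (?E ** B)" by (simp add: mm_add_r matrix_mul_assoc)
    then show ?thesis using G1p(2) EB by simp
  qed
  have BG: "B ** ?G = B ** D + B ** D ** Z ** ?E"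
  proof -
    have "B ** ?G = B ** G1 + B ** G1 ** Z ** ?E" by (simp add: matrix_add_ldistrib matrix_mul_assoc)
    then show ?thesis using G1p(1) by simp
  qed
  have P0G1: "P0 ** G1 = G1"
  proof -
    have "G1 ** B ** G1 = G1" using G1p(3) unfolding Xs_iff by blast
    then show ?thesis using G1p(2) by simp
  qed
  have GBG: "?G ** B ** ?G = ?G"
  proof -
    have "?G ** B ** ?G = P0 ** G1 + P0 ** G1 ** Z ** ?E"
      unfolding GB by (simp add: matrix_add_ldistrib matrix_mul_assoc)
    then show ?thesis using P0G1 by simp
  qed
  have BGB: "B ** ?G ** B = B"
  proof -
    have "B ** ?G ** B = B ** (?G ** B)" by (simp add: matrix_mul_assoc)
    then show ?thesis using GB P0_idem(2) by simp
  qed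
  have "?G \<in> Xs" unfolding Xs_iff using GB GBG BGB by blast
  moreover have "cstar (B ** ?G) \<noteq> B ** ?G"
  proof
    assume h: "cstar (B ** ?G) = B ** ?G"
    have "cstar (B ** ?G) = B ** D + ?E ** cstar Z ** (B ** D)"
      unfolding BG using Dp(3) Eh by (simp add: cstar_add cstar_mult matrix_mul_assoc)
    then have eq: "B ** D ** Z ** ?E = ?E ** cstar Z ** (B ** D)" using h BG by simp
    have "B ** D ** (B ** D ** Z ** ?E) = B ** D ** (B ** D) ** Z ** ?E"
      by (simp add: matrix_mul_assoc)
    then have 1: "B ** D ** (B ** D ** Z ** ?E) = B ** D ** Z ** ?E" using BDBD by simp
    have "B ** D ** (?E ** cstar Z ** (B ** D)) = (B ** D ** ?E) ** cstar Z ** (B ** D)"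
      by (simp add: matrix_mul_assoc)
    then have 2: "B ** D ** (?E ** cstar Z ** (B ** D)) = 0" using BDE by simp
    show False using 1 2 eq Z by simp
  qed
  ultimately show ?thesis by blast
qed

lemma E4: assumes "\<not> LI" "\<not> RI"
  shows "\<exists>G. B ** G ** B = B \<and> cstar (B ** G) = B ** G \<and> cstar (G ** B) = G ** B \<and> G ** B ** G \<noteq> G"
proof -
  let ?E = "mat 1 - B ** D" and ?K = "mat 1 - D ** B"
  obtain W where W: "?K ** W ** ?E \<noteq> 0" using exists_JWK[OF nLI2[OF assms(1)] nRI[OF assms(2)]] by blast
  have EB: "?E ** B = 0" using Dp(1) by (simp add: mm_diff_r)
  have BK: "B ** ?K = 0" using Dpr(1) by (simp add: mm_diff_l)
  have DBDB: "D ** B ** (D ** B) = D ** B" using Dp(2) by (simp add: matrix_mul_assoc)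
  have DBK: "D ** B ** ?K = 0" using DBDB by (simp add: mm_diff_l)
  let ?G = "D + ?K ** W ** ?E"
  have BG: "B ** ?G = B ** D"
  proof -
    have "B ** ?G = B ** D + (B ** ?K) ** W ** ?E" by (simp add: matrix_add_ldistrib matrix_mul_assoc)
    then show ?thesis using BK by simp
  qed
  have GB: "?G ** B = D ** B"
  proof -
    have "?G ** B = D ** B + ?K ** W ** (?E ** B)" by (simp add: mm_add_r matrix_mul_assoc)
    then show ?thesis using EB by simp
  qed
  have GBG: "?G ** B ** ?G = D"
  proof -
    have "?G ** B ** ?G = D ** B ** D + (D ** B ** ?K) ** W ** ?E"
      unfolding GB by (simp add: matrix_add_ldistrib matrix_mul_assoc)
    then show ?thesis using DBK Dp(2) by simp
  qed
  have 1: "B ** ?G ** B = B" using BG Dp(1) by simp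
  have 2: "?G ** B ** ?G \<noteq> ?G" using GBG W by simp
  show ?thesis using 1 2 BG GB Dp(3,4) by metis
qed

definition "R2 = (colspace (C ** cstar C ** cstar B) = colspace (cstar B))"

lemma P0_R2: "cstar P0 = P0 \<longleftrightarrow> R2"
proof -
  define S where "S = C ** cstar C"
  define Si where "Si = cstar Ci ** Ci"
  define Pn where "Pn = D ** B"
  have cCC: "cstar Ci ** cstar C = mat 1" using CCi by (metis cstar_mult cstar_1)
  have cCC2: "cstar C ** cstar Ci = mat 1" using CiC by (metis cstar_mult cstar_1)
  have "S ** Si = C ** (cstar C ** cstar Ci) ** Ci" unfolding S_def Si_def by (simp add: matrix_mul_assoc)
  then have SSi: "S ** Si = mat 1" using cCC2 CCi by simp
  have "Si ** S = cstar Ci ** (Ci ** C) ** cstar C" unfolding S_def Si_def by (simp add: matrix_mul_assoc)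
  then have SiS: "Si ** S = mat 1" using cCC CiC by simp
  have Sh: "cstar S = S" unfolding S_def by (simp add: cstar_mult matrix_mul_assoc)
  have key: "S ** cstar P0 = P0 ** S"
  proof -
    have h: "cstar (Ci ** P0 ** C) = Ci ** P0 ** C"
      using XsD(3)[OF G0_X] unfolding P0_def by (simp add: matrix_mul_assoc)
    then have "cstar C ** cstar P0 ** cstar Ci = Ci ** P0 ** C"
      by (simp add: cstar_mult matrix_mul_assoc)
    then have e: "C ** (cstar C ** cstar P0 ** cstar Ci) ** cstar C = C ** (Ci ** P0 ** C) ** cstar C"
      by simp
    have l: "C ** (cstar C ** cstar P0 ** cstar Ci) ** cstar C = S ** cstar P0 ** (cstar Ci ** cstar C)"
      unfolding S_def by (simp add: matrix_mul_assoc)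
    have r: "C ** (Ci ** P0 ** C) ** cstar C = (C ** Ci) ** P0 ** S"
      unfolding S_def by (simp add: matrix_mul_assoc)
    show ?thesis using e l r cCC CCi by simp
  qed
  have Pnh: "cstar Pn = Pn" unfolding Pn_def by (rule Dp(4))
  have P0Pn: "P0 ** Pn = P0"
  proof -
    have "P0 ** Pn = G0 ** (B ** D ** B)" unfolding P0_def Pn_def by (simp add: matrix_mul_assoc)
    then show ?thesis using Dp(1) P0_def by simp
  qed
  have PnP0: "Pn ** P0 = Pn"
  proof -
    have "Pn ** P0 = D ** (B ** G0 ** B)" unfolding P0_def Pn_def by (simp add: matrix_mul_assoc)
    then show ?thesis using XsD(1)[OF G0_X] Pn_def by (simp add: matrix_mul_assoc)
  qed
  have PnB: "Pn ** cstar B = cstar B"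
  proof -
    have "Pn ** cstar B = cstar (B ** Pn)" using Pnh by (simp add: cstar_mult)
    also have "B ** Pn = B" unfolding Pn_def using Dp(1) by (simp add: matrix_mul_assoc)
    finally show ?thesis .
  qed
  have Pn2: "Pn = cstar B ** cstar D" using Pnh unfolding Pn_def by (simp add: cstar_mult)
  have R2_def': "R2 = (colspace (S ** cstar B) = colspace (cstar B))" unfolding R2_def S_def ..
  show ?thesis
  proof
    assume hP: "cstar P0 = P0"
    have P0eq: "P0 = Pn" by (rule herm_eq[OF P0Pn PnP0 hP Pnh])
    have SPn: "S ** Pn = Pn ** S" using key hP P0eq by simp
    have SiPn: "Si ** Pn = Pn ** Si"
    proof -
      have "Si ** Pn = Si ** Pn ** (S ** Si)" using SSi by simp
      also have "\<dots> = Si ** (Pn ** S) ** Si" by (simp add: matrix_mul_assoc)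
      also have "\<dots> = Si ** (S ** Pn) ** Si" using SPn by simp
      also have "\<dots> = (Si ** S) ** Pn ** Si" by (simp add: matrix_mul_assoc)
      finally show ?thesis using SiS by simp
    qed
    have a: "S ** cstar B = cstar B ** (cstar D ** S ** cstar B)"
    proof -
      have "S ** cstar B = S ** (Pn ** cstar B)" using PnB by simp
      also have "\<dots> = (S ** Pn) ** cstar B" by (simp add: matrix_mul_assoc)
      also have "\<dots> = Pn ** S ** cstar B" using SPn by simp
      finally show ?thesis using Pn2 by (simp add: matrix_mul_assoc)
    qed
    have b: "cstar B = S ** cstar B ** (cstar D ** Si ** cstar B)"
    proof -
      have "cstar B = (S ** Si) ** (Pn ** cstar B)" using SSi PnB by simp
      also have "\<dots> = S ** (Si ** Pn) ** cstar B" by (simp add: matrix_mul_assoc)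
      also have "\<dots> = S ** Pn ** Si ** cstar B" using SiPn by (simp add: matrix_mul_assoc)
      finally show ?thesis using Pn2 by (simp add: matrix_mul_assoc)
    qed
    show R2 unfolding R2_def' using colspace_le[OF a] colspace_le[OF b] by blast
  next
    assume R2
    then have sub: "colspace (S ** cstar B) \<subseteq> colspace (cstar B)" unfolding R2_def' by simp
    have PSB: "Pn ** (S ** cstar B) = S ** cstar B"
      unfolding matrix_eq
    proof
      fix x
      obtain y where y: "(S ** cstar B) *v x = cstar B *v y" using colspace_leD[OF sub] by blast
      have "(Pn ** (S ** cstar B)) *v x = Pn *v ((S ** cstar B) *v x)"
        by (rule matrix_vector_mul_assoc[symmetric])
      also have "\<dots> = Pn *v (cstar B *v y)" by (simp only: y)
      also have "\<dots> = (Pn ** cstar B) *v y" by (rule matrix_vector_mul_assoc)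
      also have "\<dots> = (S ** cstar B) *v x" using PnB y by simp
      finally show "(Pn ** (S ** cstar B)) *v x = (S ** cstar B) *v x" .
    qed
    have PSP: "Pn ** S ** Pn = S ** Pn"
    proof -
      have "Pn ** S ** Pn = (Pn ** (S ** cstar B)) ** cstar D" unfolding Pn2 by (simp add: matrix_mul_assoc)
      also have "\<dots> = S ** Pn" using PSB unfolding Pn2 by (simp add: matrix_mul_assoc)
      finally show ?thesis .
    qed
    have "cstar (Pn ** S ** Pn) = Pn ** S ** Pn" using Pnh Sh by (simp add: cstar_mult matrix_mul_assoc)
    moreover have "cstar (S ** Pn) = Pn ** S" using Pnh Sh by (simp add: cstar_mult)
    ultimately have "Pn ** S = S ** Pn" using PSP by metis
    then have SPn: "S ** Pn = Pn ** S" by (rule sym)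
    have cP0Pn: "cstar P0 ** Pn = Pn"
    proof -
      have "cstar (Pn ** P0) = cstar P0 ** Pn" using Pnh by (simp add: cstar_mult)
      then show ?thesis using PnP0 Pnh by simp
    qed
    have "P0 ** S ** Pn = S ** (cstar P0 ** Pn)" using key by (simp add: matrix_mul_assoc)
    then have 1: "P0 ** S ** Pn = S ** Pn" using cP0Pn by simp
    have "P0 ** S ** Pn = P0 ** (S ** Pn)" by (simp add: matrix_mul_assoc)
    also have "\<dots> = (P0 ** Pn) ** S" using SPn by (simp add: matrix_mul_assoc)
    finally have 2: "P0 ** S ** Pn = P0 ** S" using P0Pn by simp
    have "P0 ** S = Pn ** S" using 1 2 SPn by metis
    then have "P0 ** (S ** Si) = Pn ** (S ** Si)" by (simp add: matrix_mul_assoc)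
    then have "P0 = Pn" using SSi by simp
    then show "cstar P0 = P0" using Pnh by simp
  qed
qed


lemma g_simps:
  "G \<in> gen_inv {1} B \<longleftrightarrow> B ** G ** B = B"
  "G \<in> gen_inv {1,2} B \<longleftrightarrow> B ** G ** B = B \<and> G ** B ** G = G"
  "G \<in> gen_inv {1,3} B \<longleftrightarrow> B ** G ** B = B \<and> cstar (B ** G) = B ** G"
  "G \<in> gen_inv {1,4} B \<longleftrightarrow> B ** G ** B = B \<and> cstar (G ** B) = G ** B"
  "G \<in> gen_inv {1,2,3} B \<longleftrightarrow> B ** G ** B = B \<and> G ** B ** G = G \<and> cstar (B ** G) = B ** G"
  "G \<in> gen_inv {1,2,4} B \<longleftrightarrow> B ** G ** B = B \<and> G ** B ** G = G \<and> cstar (G ** B) = G ** B"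
  "G \<in> gen_inv {1,3,4} B \<longleftrightarrow> B ** G ** B = B \<and> cstar (B ** G) = B ** G \<and> cstar (G ** B) = G ** B"
  by (auto simp: gen_inv_def)

lemma nz: "\<exists>G::complex^'m^'n. G \<noteq> 0"
proof -
  obtain i :: 'n and j :: 'm where True by blast
  have "((\<chi> a b. 1) :: complex^'m^'n) $ i $ j \<noteq> (0::complex^'m^'n) $ i $ j" by simp
  then have "((\<chi> a b. 1) :: complex^'m^'n) \<noteq> 0" by metis
  then show ?thesis by blast
qed

lemma mat1_nz: "(mat 1 :: complex^'k^'k) \<noteq> 0"
proof
  assume "(mat 1 :: complex^'k^'k) = 0"
  then have "(mat 1 :: complex^'k^'k) $ undefined $ undefined = 0" by simp
  then show False by (simp add: mat_def)
qed

lemma LI_nz: "LI \<Longrightarrow> B \<noteq> 0"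
  unfolding LI_def using mat1_nz by force

lemma RI_nz: "RI \<Longrightarrow> B \<noteq> 0"
  unfolding RI_def using mat1_nz by force

lemma B0_R2: "B = 0 \<Longrightarrow> R2"
  using P0_R2 unfolding P0_def by simp

lemma herm_P0_Xs: "cstar P0 = P0 \<Longrightarrow> Xs = gen_inv {1,2,4} B"
proof
  assume h: "cstar P0 = P0"
  show "Xs \<subseteq> gen_inv {1,2,4} B" using h by (auto simp: gen_inv_def Xs_iff)
  show "gen_inv {1,2,4} B \<subseteq> Xs"
  proof
    fix G assume "G \<in> gen_inv {1,2,4} B"
    then have G: "B ** G ** B = B" "G ** B ** G = G" "cstar (G ** B) = G ** B" by (auto simp: gen_inv_def)
    then show "G \<in> Xs" using B1herm[OF G(1) G(3) h] Xs_iff by blast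
  qed
qed

lemma c41: "Xs = gen_inv {1} B \<longleftrightarrow> LI"
proof
  assume LI
  then show "Xs = gen_inv {1} B" using LI_X XsD by (auto simp: gen_inv_def)
next
  assume eq: "Xs = gen_inv {1} B"
  show LI
  proof (rule ccontr)
    assume nLI: "\<not> LI"
    show False
    proof (cases "B = 0")
      case True
      then have "Xs = {0}" by (rule B0_X)
      moreover have "gen_inv {1} B = UNIV" using True by (auto simp: gen_inv_def)
      ultimately show False using eq nz by auto
    next
      case False
      obtain H where H: "B ** H ** B = B" "H ** B \<noteq> P0" using E2[OF nLI False] by blast
      then have "H \<in> Xs" using eq by (simp add: gen_inv_def)
      then show False using XB H by blast
    qed
  qed
qed

lemma c42: "Xs = gen_inv {1,2} B \<longleftrightarrow> (B = 0 \<or> LI)"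
proof
  assume a: "B = 0 \<or> LI"
  show "Xs = gen_inv {1,2} B"
  proof (cases "B = 0")
    case True
    then show ?thesis using B0_X by (auto simp: gen_inv_def)
  next
    case False
    then have LI using a by blast
    then show ?thesis using LI_X XsD by (auto simp: gen_inv_def)
  qed
next
  assume eq: "Xs = gen_inv {1,2} B"
  show "B = 0 \<or> LI"
  proof (rule ccontr)
    assume "\<not> (B = 0 \<or> LI)"
    then obtain H where H: "B ** H ** B = B" "H ** B ** H = H" "H ** B \<noteq> P0" using E2' by blast
    then have "H \<in> Xs" using eq by (simp add: gen_inv_def)
    then show False using XB H by blast
  qed
qed

lemma G1_123: "G1 \<in> gen_inv {1,2,3} B" "G1 \<in> gen_inv {1,3} B"
  using G1p Xs_iff by (auto simp: gen_inv_def)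

lemma c43a: "Xs \<inter> gen_inv {1,3} B \<noteq> {}" "Xs \<inter> gen_inv {1,2,3} B \<noteq> {}"
  using G1_123 G1p(3) by blast+

lemma c43b: "gen_inv {1,3} B \<subseteq> Xs \<longleftrightarrow> LI"
proof
  assume LI
  then show "gen_inv {1,3} B \<subseteq> Xs" using LI_X by (auto simp: gen_inv_def)
next
  assume sub: "gen_inv {1,3} B \<subseteq> Xs"
  show LI
  proof (rule ccontr)
    assume nLI: "\<not> LI"
    show False
    proof (cases "B = 0")
      case True
      then have "Xs = {0}" by (rule B0_X)
      moreover have "gen_inv {1,3} B = UNIV" using True by (auto simp: gen_inv_def)
      ultimately show False using sub nz by auto
    next
      case False
      obtain H where H: "B ** H ** B = B" "cstar (B ** H) = B ** H" "H ** B \<noteq> P0" using E2[OF nLI False] by blast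
      then have "H \<in> Xs" using sub by (auto simp: gen_inv_def)
      then show False using XB H by blast
    qed
  qed
qed

lemma c43c: "Xs \<subseteq> gen_inv {1,3} B \<longleftrightarrow> (B = 0 \<or> RI)"
proof
  assume a: "B = 0 \<or> RI"
  show "Xs \<subseteq> gen_inv {1,3} B"
  proof (cases "B = 0")
    case True
    then show ?thesis using B0_X by (auto simp: gen_inv_def)
  next
    case False
    then have RI using a by blast
    show ?thesis
    proof
      fix G assume "G \<in> Xs"
      then have "B ** G ** B = B" by (rule XsD)
      moreover then have "B ** G = mat 1" using RI_1 \<open>RI\<close> by blast
      ultimately show "G \<in> gen_inv {1,3} B" by (simp add: gen_inv_def)
    qed
  qed
next
  assume sub: "Xs \<subseteq> gen_inv {1,3} B"
  show "B = 0 \<or> RI"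
  proof (rule ccontr)
    assume "\<not> (B = 0 \<or> RI)"
    then obtain G where "G \<in> Xs" "cstar (B ** G) \<noteq> B ** G" using E3 by blast
    then show False using sub by (auto simp: gen_inv_def)
  qed
qed

lemma c44b': "Xs \<subseteq> gen_inv {1,4} B \<longleftrightarrow> cstar P0 = P0"
proof
  assume "Xs \<subseteq> gen_inv {1,4} B"
  then have "G0 \<in> gen_inv {1,4} B" using G0_X by blast
  then show "cstar P0 = P0" unfolding P0_def by (simp add: gen_inv_def)
next
  assume "cstar P0 = P0"
  then show "Xs \<subseteq> gen_inv {1,4} B" by (auto simp: gen_inv_def Xs_iff)
qed

lemma c44b: "Xs \<subseteq> gen_inv {1,4} B \<longleftrightarrow> R2"
  using c44b' P0_R2 by simp

lemma c44a: "Xs \<inter> gen_inv {1,4} B \<noteq> {} \<longleftrightarrow> Xs \<subseteq> gen_inv {1,4} B"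
proof
  assume "Xs \<inter> gen_inv {1,4} B \<noteq> {}"
  then obtain G where G: "G \<in> Xs" "G \<in> gen_inv {1,4} B" by blast
  then have "cstar P0 = P0" using XB by (auto simp: gen_inv_def)
  then show "Xs \<subseteq> gen_inv {1,4} B" using c44b' by blast
next
  assume "Xs \<subseteq> gen_inv {1,4} B"
  then show "Xs \<inter> gen_inv {1,4} B \<noteq> {}" using G0_X by blast
qed

lemma RI_14: assumes "RI" "cstar P0 = P0" "G \<in> gen_inv {1,4} B" shows "G \<in> Xs"
proof -
  have G: "B ** G ** B = B" "cstar (G ** B) = G ** B" using assms(3) by (auto simp: gen_inv_def)
  have BG: "B ** G = mat 1" using RI_1 assms(1) G(1) by blast
  have "G ** B ** G = G ** (B ** G)" by (simp add: matrix_mul_assoc)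
  then have "G ** B ** G = G" using BG by simp
  then show ?thesis using G B1herm[OF G assms(2)] Xs_iff by blast
qed

lemma c44d: "Xs = gen_inv {1,4} B \<longleftrightarrow> R2 \<and> (LI \<or> RI)"
proof
  assume a: "R2 \<and> (LI \<or> RI)"
  then have h: "cstar P0 = P0" using P0_R2 by blast
  have "gen_inv {1,4} B \<subseteq> Xs"
  proof
    fix G assume G: "G \<in> gen_inv {1,4} B"
    show "G \<in> Xs"
    proof (cases LI)
      case True then show ?thesis using LI_X G by (auto simp: gen_inv_def)
    next
      case False then have RI using a by blast
      then show ?thesis using RI_14 h G by blast
    qed
  qed
  then show "Xs = gen_inv {1,4} B" using c44b a by blast
next
  assume eq: "Xs = gen_inv {1,4} B"
  then have R2 using c44b by blast
  moreover have "LI \<or> RI"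
  proof (rule ccontr)
    assume "\<not> (LI \<or> RI)"
    then obtain G where G: "B ** G ** B = B" "cstar (G ** B) = G ** B" "G ** B ** G \<noteq> G"
      using E4 by blast
    then have "G \<in> Xs" using eq by (simp add: gen_inv_def)
    then show False using G XsD by blast
  qed
  ultimately show "R2 \<and> (LI \<or> RI)" by blast
qed

lemma c45b: "gen_inv {1,2,3} B \<subseteq> Xs \<longleftrightarrow> (B = 0 \<or> LI)"
proof
  assume a: "B = 0 \<or> LI"
  show "gen_inv {1,2,3} B \<subseteq> Xs"
  proof (cases "B = 0")
    case True
    then show ?thesis using B0_X by (auto simp: gen_inv_def)
  next
    case False
    then have LI using a by blast
    then show ?thesis using LI_X by (auto simp: gen_inv_def)
  qed
next
  assume sub: "gen_inv {1,2,3} B \<subseteq> Xs"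
  show "B = 0 \<or> LI"
  proof (rule ccontr)
    assume "\<not> (B = 0 \<or> LI)"
    then obtain H where H: "B ** H ** B = B" "H ** B ** H = H" "cstar (B ** H) = B ** H" "H ** B \<noteq> P0"
      using E2' by blast
    then have "H \<in> Xs" using sub by (auto simp: gen_inv_def)
    then show False using XB H by blast
  qed
qed

lemma c45c: "Xs \<subseteq> gen_inv {1,2,3} B \<longleftrightarrow> (B = 0 \<or> RI)"
proof -
  have "Xs \<subseteq> gen_inv {1,2,3} B \<longleftrightarrow> Xs \<subseteq> gen_inv {1,3} B"
    using XsD by (auto simp: gen_inv_def)
  then show ?thesis using c43c by simp
qed

lemma c46: "Xs \<inter> gen_inv {1,2,4} B \<noteq> {} \<longleftrightarrow> R2" "Xs = gen_inv {1,2,4} B \<longleftrightarrow> R2"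
proof -
  have 1: "Xs \<inter> gen_inv {1,2,4} B \<noteq> {} \<Longrightarrow> R2"
  proof -
    assume "Xs \<inter> gen_inv {1,2,4} B \<noteq> {}"
    then obtain G where "G \<in> Xs" "G \<in> gen_inv {1,2,4} B" by blast
    then have "cstar P0 = P0" using XB by (auto simp: gen_inv_def)
    then show R2 using P0_R2 by blast
  qed
  have 2: "R2 \<Longrightarrow> Xs = gen_inv {1,2,4} B" using herm_P0_Xs P0_R2 by blast
  show "Xs \<inter> gen_inv {1,2,4} B \<noteq> {} \<longleftrightarrow> R2" using 1 2 G0_X by blast
  show "Xs = gen_inv {1,2,4} B \<longleftrightarrow> R2" using 1 2 G0_X by blast
qed

lemma c47a: "Xs \<inter> gen_inv {1,3,4} B \<noteq> {} \<longleftrightarrow> R2"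
proof
  assume "Xs \<inter> gen_inv {1,3,4} B \<noteq> {}"
  then obtain G where "G \<in> Xs" "G \<in> gen_inv {1,3,4} B" by blast
  then have "cstar P0 = P0" using XB by (auto simp: gen_inv_def)
  then show R2 using P0_R2 by blast
next
  assume R2
  then have "cstar P0 = P0" using P0_R2 by blast
  then have "G1 \<in> gen_inv {1,3,4} B" using G1p by (auto simp: gen_inv_def)
  then show "Xs \<inter> gen_inv {1,3,4} B \<noteq> {}" using G1p(3) by blast
qed

lemma c47b: "gen_inv {1,3,4} B \<subseteq> Xs \<longleftrightarrow> R2 \<and> (LI \<or> RI)"
proof
  assume "R2 \<and> (LI \<or> RI)"
  then have "Xs = gen_inv {1,4} B" using c44d by blast
  moreover have "gen_inv {1,3,4} B \<subseteq> gen_inv {1,4} B" by (auto simp: gen_inv_def)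
  ultimately show "gen_inv {1,3,4} B \<subseteq> Xs" by simp
next
  assume sub: "gen_inv {1,3,4} B \<subseteq> Xs"
  have "D \<in> gen_inv {1,3,4} B" using Dp by (auto simp: gen_inv_def)
  then have "D \<in> Xs" using sub by blast
  then have "cstar P0 = P0" using XB Dp(4) by metis
  then have R2 using P0_R2 by blast
  moreover have "LI \<or> RI"
  proof (rule ccontr)
    assume "\<not> (LI \<or> RI)"
    then obtain G where G: "B ** G ** B = B" "cstar (B ** G) = B ** G" "cstar (G ** B) = G ** B" "G ** B ** G \<noteq> G"
      using E4 by blast
    then have "G \<in> Xs" using sub by (auto simp: gen_inv_def)
    then show False using G XsD by blast
  qed
  ultimately show "R2 \<and> (LI \<or> RI)" by blast
qed

lemma c47c: "Xs \<subseteq> gen_inv {1,3,4} B \<longleftrightarrow> (B = 0 \<or> (R2 \<and> RI))"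
proof -
  have "gen_inv {1,3,4} B = gen_inv {1,3} B \<inter> gen_inv {1,4} B" by (auto simp: gen_inv_def)
  then have "Xs \<subseteq> gen_inv {1,3,4} B \<longleftrightarrow> Xs \<subseteq> gen_inv {1,3} B \<and> Xs \<subseteq> gen_inv {1,4} B"
    by simp
  then show ?thesis using c43c c44b B0_R2 by blast
qed

lemma c48: "D \<in> Xs \<longleftrightarrow> R2"
proof
  assume "D \<in> Xs"
  then have "cstar P0 = P0" using XB Dp(4) by metis
  then show R2 using P0_R2 by blast
next
  assume R2
  then have "cstar P0 = P0" using P0_R2 by blast
  then have "D ** B = P0" using B1herm Dp by blast
  then show "D \<in> Xs" using Dp Xs_iff by blast
qed

end


lemma rank_LI: "rank (B::'a::field^'n^'m) = CARD('n) \<longleftrightarrow> (\<exists>L. L ** B = mat 1)"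
  unfolding row_rank_def_gen matrix_left_invertible_span_rows_gen
  by (simp add: vec.dim_eq_full[symmetric] card_cart_basis vec.dimension_def)

lemma rows_range: "rows B = range (\<lambda>i. row i B)"
  unfolding rows_def by auto

lemma rank_le_n: "rank (B::'a::field^'n^'m) \<le> CARD('n)"
  unfolding row_rank_def_gen by (rule dim_subset_UNIV_cart_gen)

lemma rank_le_m: "rank (B::'a::field^'n^'m) \<le> CARD('m)"
proof -
  have "vec.dim (rows B) \<le> card (rows B)"
    by (rule vec.dim_le_card) (auto simp: rows_range vec.span_base)
  also have "\<dots> \<le> CARD('m)" unfolding rows_range by (rule card_image_le) simp
  finally show ?thesis unfolding row_rank_def_gen .
qed

lemma rank_RI: "rank (B::'a::field^'n^'m) = CARD('m) \<longleftrightarrow> (\<exists>R. B ** R = mat 1)"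
proof -
  define f where "f i = row i B" for i
  have R: "rows B = range f" unfolding rows_range f_def ..
  have fin: "finite (range f)" by simp
  have RI: "(\<exists>R. B ** R = mat 1) \<longleftrightarrow> (\<forall>c. (\<Sum>i\<in>UNIV. c i *s f i) = 0 \<longrightarrow> (\<forall>i. c i = 0))"
    unfolding f_def by (rule matrix_right_invertible_independent_rows)
  show ?thesis
  proof
    assume rk: "rank B = CARD('m)"
    have d: "vec.dim (range f) = CARD('m)" using rk unfolding row_rank_def_gen R .
    have "vec.dim (range f) \<le> card (range f)"
      by (rule vec.dim_le_card) (auto simp: vec.span_base)
    moreover have "card (range f) \<le> CARD('m)" by (rule card_image_le) simp
    ultimately have c: "card (range f) = CARD('m)" using d by linarith
    then have inj: "inj f" using eq_card_imp_inj_on[of UNIV f] by simp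
    have ind: "vec.independent (range f)"
      using vec.card_eq_dim[of "range f" "range f"] c d fin by (auto simp: vec.span_base)
    show "\<exists>R. B ** R = mat 1" unfolding RI
    proof (intro allI impI)
      fix c :: "'m \<Rightarrow> 'a" and i
      assume s: "(\<Sum>i\<in>UNIV. c i *s f i) = 0"
      let ?u = "\<lambda>v. c (inv f v)"
      have "(\<Sum>v\<in>range f. ?u v *s v) = (\<Sum>i\<in>UNIV. ?u (f i) *s f i)"
        by (rule sum.reindex[OF inj, unfolded o_def])
      also have "\<dots> = 0" using s inj by simp
      finally have su: "(\<Sum>v\<in>range f. ?u v *s v) = 0" .
      have gen: "\<forall>u. (\<Sum>v\<in>range f. u v *s v) = 0 \<longrightarrow> (\<forall>v\<in>range f. u v = 0)"
        using ind vec.dependent_finite[OF fin] by auto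
      have "\<forall>v\<in>range f. ?u v = 0" using gen[rule_format, OF su] by blast
      then show "c i = 0" using inj by (metis inv_f_f rangeI)
    qed
  next
    assume "\<exists>R. B ** R = mat 1"
    then have fam0: "\<forall>c. (\<Sum>i\<in>UNIV. c i *s f i) = 0 \<longrightarrow> (\<forall>i. c i = 0)" using RI by simp
    have fam: "\<And>c. (\<Sum>i\<in>UNIV. c i *s f i) = 0 \<Longrightarrow> (\<forall>i. c i = 0)" using fam0 by simp
    have inj: "inj f"
    proof (rule injI, rule ccontr)
      fix i j assume eq: "f i = f j" and ne: "i \<noteq> j"
      define c where "c k = (if k = i then 1 else 0) - (if k = j then 1 else (0::'a))" for k
      have "(\<Sum>k\<in>UNIV. c k *s f k) = (\<Sum>k\<in>UNIV. (if k = i then 1 else 0) *s f k) - (\<Sum>k\<in>UNIV. (if k = j then 1 else 0) *s f k)"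
        unfolding c_def by (simp add: vec.scale_left_diff_distrib sum_subtractf)
      also have "\<dots> = f i - f j"
      proof -
        have dl: "(\<Sum>k\<in>UNIV. (if k = a then 1 else 0) *s f k) = f a" for a
        proof -
          have "(\<Sum>k\<in>UNIV. (if k = a then 1 else 0) *s f k) = (\<Sum>k\<in>UNIV. if k = a then f k else 0)"
            by (rule sum.cong) auto
          then show ?thesis by simp
        qed
        show ?thesis by (simp only: dl)
      qed
      finally have "(\<Sum>k\<in>UNIV. c k *s f k) = 0" using eq by simp
      then have "c i = 0" using fam[of c] by simp
      then show False using ne unfolding c_def by simp
    qed
    have ind: "vec.independent (range f)"
    proof
      assume "vec.dependent (range f)"
      then obtain u where u: "\<exists>v\<in>range f. u v \<noteq> 0" "(\<Sum>v\<in>range f. u v *s v) = 0"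
        using vec.dependent_finite[OF fin] by blast
      have "(\<Sum>i\<in>UNIV. u (f i) *s f i) = 0"
        using u(2) sum.reindex[OF inj, of "\<lambda>v. u v *s v"] by simp
      then have "\<forall>i. u (f i) = 0" using fam[of "\<lambda>i. u (f i)"] by simp
      then show False using u(1) by auto
    qed
    have "vec.dim (range f) = card (range f)" by (rule vec.dim_eq_card_independent[OF ind])
    also have "\<dots> = CARD('m)" using card_image[OF inj] by simp
    finally show "rank B = CARD('m)" unfolding row_rank_def_gen R .
  qed
qed



context core
begin

lemma c44c: "gen_inv {1,4} B \<subseteq> Xs \<Longrightarrow> Xs \<subseteq> gen_inv {1,4} B"
proof -
  assume sub: "gen_inv {1,4} B \<subseteq> Xs"
  have "D \<in> gen_inv {1,4} B" using Dp by (auto simp: gen_inv_def)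
  then have "D \<in> Xs" using sub by blast
  then have "cstar P0 = P0" using XB Dp(4) by metis
  then show ?thesis using c44b' by blast
qed

lemma Xs_sub1: "Xs \<subseteq> gen_inv {1} B" "Xs \<subseteq> gen_inv {1,2} B"
  using XsD by (auto simp: gen_inv_def)

lemma s1: "gen_inv {1} B \<subseteq> Xs \<longleftrightarrow> LI"
proof
  assume h: "gen_inv {1} B \<subseteq> Xs"
  have "Xs = gen_inv {1} B" by (rule subset_antisym[OF Xs_sub1(1) h])
  then show LI using c41 by blast
next
  assume LI
  then have "Xs = gen_inv {1} B" using c41 by blast
  then show "gen_inv {1} B \<subseteq> Xs" by (rule equalityD2)
qed

lemma s12: "gen_inv {1,2} B \<subseteq> Xs \<longleftrightarrow> (B = 0 \<or> LI)"
proof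
  assume h: "gen_inv {1,2} B \<subseteq> Xs"
  have "Xs = gen_inv {1,2} B" by (rule subset_antisym[OF Xs_sub1(2) h])
  then show "B = 0 \<or> LI" using c42 by blast
next
  assume "B = 0 \<or> LI"
  then have "Xs = gen_inv {1,2} B" using c42 by blast
  then show "gen_inv {1,2} B \<subseteq> Xs" by (rule equalityD2)
qed

lemma eq13: "Xs = gen_inv {1,3} B \<longleftrightarrow> (LI \<and> RI)"
proof
  assume h: "Xs = gen_inv {1,3} B"
  then have l: LI using c43b equalityD2 by blast
  have "B = 0 \<or> RI" using h c43c equalityD1 by blast
  then show "LI \<and> RI" using l LI_nz by blast
next
  assume h: "LI \<and> RI"
  have 1: "gen_inv {1,3} B \<subseteq> Xs" using h c43b by blast
  have 2: "Xs \<subseteq> gen_inv {1,3} B" using h c43c by blast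
  show "Xs = gen_inv {1,3} B" by (rule subset_antisym[OF 2 1])
qed

lemma int14: "Xs \<inter> gen_inv {1,4} B \<noteq> {} \<longleftrightarrow> R2"
  using c44a c44b by blast

lemma sup14: "gen_inv {1,4} B \<subseteq> Xs \<longleftrightarrow> R2 \<and> (LI \<or> RI)"
proof
  assume h: "gen_inv {1,4} B \<subseteq> Xs"
  have "Xs = gen_inv {1,4} B" by (rule subset_antisym[OF c44c[OF h] h])
  then show "R2 \<and> (LI \<or> RI)" using c44d by blast
next
  assume "R2 \<and> (LI \<or> RI)"
  then have "Xs = gen_inv {1,4} B" using c44d by blast
  then show "gen_inv {1,4} B \<subseteq> Xs" by (rule equalityD2)
qed

lemma eq123: "Xs = gen_inv {1,2,3} B \<longleftrightarrow> (B = 0 \<or> (LI \<and> RI))"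
proof
  assume h: "Xs = gen_inv {1,2,3} B"
  have 1: "B = 0 \<or> LI" using h c45b equalityD2 by blast
  have 2: "B = 0 \<or> RI" using h c45c equalityD1 by blast
  show "B = 0 \<or> (LI \<and> RI)" using 1 2 by blast
next
  assume h: "B = 0 \<or> (LI \<and> RI)"
  have 1: "gen_inv {1,2,3} B \<subseteq> Xs" using h c45b by blast
  have 2: "Xs \<subseteq> gen_inv {1,2,3} B" using h c45c by blast
  show "Xs = gen_inv {1,2,3} B" by (rule subset_antisym[OF 2 1])
qed

lemma eq134: "Xs = gen_inv {1,3,4} B \<longleftrightarrow> (R2 \<and> RI)"
proof
  assume h: "Xs = gen_inv {1,3,4} B"
  have 1: "R2 \<and> (LI \<or> RI)" using h c47b equalityD2 by blast
  have 2: "B = 0 \<or> (R2 \<and> RI)" using h c47c equalityD1 by blast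
  have "B \<noteq> 0" using 1 LI_nz RI_nz by blast
  then show "R2 \<and> RI" using 2 by blast
next
  assume h: "R2 \<and> RI"
  have 1: "gen_inv {1,3,4} B \<subseteq> Xs" using h c47b by blast
  have 2: "Xs \<subseteq> gen_inv {1,3,4} B" using h c47c by blast
  show "Xs = gen_inv {1,3,4} B" by (rule subset_antisym[OF 2 1])
qed

end

lemma surj_vimage:
  assumes "\<And>y. f (g y) = y"
  shows "(f -` P \<subseteq> f -` Q) \<longleftrightarrow> P \<subseteq> Q"
    "(f -` P = f -` Q) \<longleftrightarrow> P = Q"
    "(f -` P \<inter> f -` Q \<noteq> {}) \<longleftrightarrow> P \<inter> Q \<noteq> {}"
proof -
  have 1: "P' \<subseteq> Q'" if h: "f -` P' \<subseteq> f -` Q'" for P' Q'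
  proof
    fix y assume "y \<in> P'"
    then have "g y \<in> f -` P'" using assms by simp
    then have "g y \<in> f -` Q'" using h by blast
    then show "y \<in> Q'" using assms by simp
  qed
  show "(f -` P \<subseteq> f -` Q) \<longleftrightarrow> P \<subseteq> Q" using 1 by blast
  show "(f -` P = f -` Q) \<longleftrightarrow> P = Q"
  proof
    assume h: "f -` P = f -` Q"
    show "P = Q" using 1[of P Q] 1[of Q P] h by simp
  qed simp
  show "(f -` P \<inter> f -` Q \<noteq> {}) \<longleftrightarrow> P \<inter> Q \<noteq> {}"
  proof
    assume "P \<inter> Q \<noteq> {}"
    then obtain y where "y \<in> P" "y \<in> Q" by blast
    then have "g y \<in> f -` P \<inter> f -` Q" using assms by auto
    then show "f -` P \<inter> f -` Q \<noteq> {}" by blast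
  qed auto
qed

theorem theorem4p2:
  fixes A :: "complex^'m^'m" and B :: "complex^'n^'m" and C :: "complex^'n^'n"
  assumes "invertible A" and "invertible C"
  shows
  "(gen_inv {1,2,4} (A ** B ** C) \<subseteq> tri_set A {1} B C) \<and>
   ((gen_inv {1,2,4} (A ** B ** C) \<supseteq> tri_set A {1} B C) \<longleftrightarrow> (gen_inv {1,2,4} (A ** B ** C) = tri_set A {1} B C)) \<and>
   ((gen_inv {1,2,4} (A ** B ** C) = tri_set A {1} B C) \<longleftrightarrow> rank B = CARD('n)) \<and>

   (gen_inv {1,2,4} (A ** B ** C) \<subseteq> tri_set A {1,2} B C) \<and>
   ((gen_inv {1,2,4} (A ** B ** C) \<supseteq> tri_set A {1,2} B C) \<longleftrightarrow> (gen_inv {1,2,4} (A ** B ** C) = tri_set A {1,2} B C)) \<and>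
   ((gen_inv {1,2,4} (A ** B ** C) = tri_set A {1,2} B C) \<longleftrightarrow> (B = 0 \<or> rank B = CARD('n))) \<and>

   (gen_inv {1,2,4} (A ** B ** C) \<inter> tri_set A {1,3} B C \<noteq> {}) \<and>
   ((gen_inv {1,2,4} (A ** B ** C) \<supseteq> tri_set A {1,3} B C) \<longleftrightarrow> rank B = CARD('n)) \<and>
   ((gen_inv {1,2,4} (A ** B ** C) \<subseteq> tri_set A {1,3} B C) \<longleftrightarrow> (B = 0 \<or> rank B = CARD('m))) \<and>
   ((gen_inv {1,2,4} (A ** B ** C) = tri_set A {1,3} B C) \<longleftrightarrow> (rank B = CARD('m) \<and> CARD('m) = CARD('n))) \<and>

   ((gen_inv {1,2,4} (A ** B ** C) \<inter> tri_set A {1,4} B C \<noteq> {}) \<longleftrightarrow> (gen_inv {1,2,4} (A ** B ** C) \<subseteq> tri_set A {1,4} B C)) \<and>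
   ((gen_inv {1,2,4} (A ** B ** C) \<subseteq> tri_set A {1,4} B C) \<longleftrightarrow> colspace (C ** cstar C ** cstar B) = colspace (cstar B)) \<and>
   ((gen_inv {1,2,4} (A ** B ** C) \<supseteq> tri_set A {1,4} B C) \<longleftrightarrow> (gen_inv {1,2,4} (A ** B ** C) = tri_set A {1,4} B C)) \<and>
   ((gen_inv {1,2,4} (A ** B ** C) = tri_set A {1,4} B C) \<longleftrightarrow>
      (colspace (C ** cstar C ** cstar B) = colspace (cstar B) \<and> rank B = min CARD('m) CARD('n))) \<and>

   (gen_inv {1,2,4} (A ** B ** C) \<inter> tri_set A {1,2,3} B C \<noteq> {}) \<and>
   ((gen_inv {1,2,4} (A ** B ** C) \<supseteq> tri_set A {1,2,3} B C) \<longleftrightarrow> (B = 0 \<or> rank B = CARD('n))) \<and>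
   ((gen_inv {1,2,4} (A ** B ** C) \<subseteq> tri_set A {1,2,3} B C) \<longleftrightarrow> (B = 0 \<or> rank B = CARD('m))) \<and>
   ((gen_inv {1,2,4} (A ** B ** C) = tri_set A {1,2,3} B C) \<longleftrightarrow> (B = 0 \<or> (rank B = CARD('m) \<and> CARD('m) = CARD('n)))) \<and>

   ((gen_inv {1,2,4} (A ** B ** C) \<inter> tri_set A {1,2,4} B C \<noteq> {}) \<longleftrightarrow> (gen_inv {1,2,4} (A ** B ** C) = tri_set A {1,2,4} B C)) \<and>
   ((gen_inv {1,2,4} (A ** B ** C) = tri_set A {1,2,4} B C) \<longleftrightarrow> colspace (C ** cstar C ** cstar B) = colspace (cstar B)) \<and>

   ((gen_inv {1,2,4} (A ** B ** C) \<inter> tri_set A {1,3,4} B C \<noteq> {}) \<longleftrightarrow> colspace (C ** cstar C ** cstar B) = colspace (cstar B)) \<and>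
   ((gen_inv {1,2,4} (A ** B ** C) \<supseteq> tri_set A {1,3,4} B C) \<longleftrightarrow>
      (colspace (C ** cstar C ** cstar B) = colspace (cstar B) \<and> rank B = min CARD('m) CARD('n))) \<and>
   ((gen_inv {1,2,4} (A ** B ** C) \<subseteq> tri_set A {1,3,4} B C) \<longleftrightarrow>
      (B = 0 \<or> (colspace (C ** cstar C ** cstar B) = colspace (cstar B) \<and> rank B = CARD('m)))) \<and>
   ((gen_inv {1,2,4} (A ** B ** C) = tri_set A {1,3,4} B C) \<longleftrightarrow>
      (colspace (C ** cstar C ** cstar B) = colspace (cstar B) \<and> rank B = CARD('m))) \<and>

   ((matrix_inv C ** moore_penrose B ** matrix_inv A \<in> gen_inv {1,2,4} (A ** B ** C)) \<longleftrightarrow>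
      colspace (C ** cstar C ** cstar B) = colspace (cstar B))"
proof -
  have CC: "C ** matrix_inv C = mat 1" "matrix_inv C ** C = mat 1" using minv assms(2) by blast+
  have AA: "A ** matrix_inv A = mat 1" "matrix_inv A ** A = mat 1" using minv assms(1) by blast+
  interpret core B C "matrix_inv C" by unfold_locales (rule CC(1), rule CC(2))
  define Ci where "Ci = matrix_inv C"
  define Ai where "Ai = matrix_inv A"
  define phi where "phi G = C ** G ** A" for G :: "complex^'m^'n"
  have phig: "phi (Ci ** G' ** Ai) = G'" for G'
  proof -
    have "phi (Ci ** G' ** Ai) = (C ** Ci) ** G' ** (Ai ** A)"
      unfolding phi_def by (simp add: matrix_mul_assoc)
    then show ?thesis using CC AA unfolding Ci_def Ai_def by simp
  qed
  have gphi: "G = Ci ** phi G ** Ai" for G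
  proof -
    have "Ci ** phi G ** Ai = (Ci ** C) ** G ** (A ** Ai)"
      unfolding phi_def by (simp add: matrix_mul_assoc)
    then show ?thesis using CC AA unfolding Ci_def Ai_def by simp
  qed
  have T1: "tri_set A S B C = phi -` gen_inv S B" for S
  proof
    show "tri_set A S B C \<subseteq> phi -` gen_inv S B"
      unfolding tri_set_def using phig unfolding Ci_def Ai_def by auto
    show "phi -` gen_inv S B \<subseteq> tri_set A S B C"
    proof
      fix G assume "G \<in> phi -` gen_inv S B"
      then have "phi G \<in> gen_inv S B" by simp
      then show "G \<in> tri_set A S B C" unfolding tri_set_def
        using gphi[of G] unfolding Ci_def Ai_def by blast
    qed
  qed
  have T2: "gen_inv {1,2,4} (A ** B ** C) = phi -` Xs"
  proof
    show "gen_inv {1,2,4} (A ** B ** C) \<subseteq> phi -` Xs"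
    proof
      fix G assume "G \<in> gen_inv {1,2,4} (A ** B ** C)"
      then have G: "A ** B ** C ** G ** (A ** B ** C) = A ** B ** C"
        "G ** (A ** B ** C) ** G = G" "cstar (G ** (A ** B ** C)) = G ** (A ** B ** C)"
        unfolding gen_inv_def by auto
      have 1: "B ** phi G ** B = B"
      proof -
        have "Ai ** (A ** B ** C ** G ** (A ** B ** C)) ** Ci = (Ai ** A) ** (B ** phi G ** B) ** (C ** Ci)"
          unfolding phi_def by (simp add: matrix_mul_assoc)
        then have "B ** phi G ** B = Ai ** (A ** B ** C ** G ** (A ** B ** C)) ** Ci"
          using AA CC unfolding Ai_def Ci_def by simp
        also have "\<dots> = (Ai ** A) ** B ** (C ** Ci)" using G(1) by (simp add: matrix_mul_assoc)
        finally show ?thesis using AA CC unfolding Ai_def Ci_def by simp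
      qed
      have 2: "phi G ** B ** phi G = phi G"
      proof -
        have "phi G ** B ** phi G = C ** (G ** (A ** B ** C) ** G) ** A"
          unfolding phi_def by (simp add: matrix_mul_assoc)
        then show ?thesis using G(2) unfolding phi_def by simp
      qed
      have e: "matrix_inv C ** phi G ** B ** C = G ** (A ** B ** C)"
      proof -
        have "matrix_inv C ** phi G ** B ** C = (matrix_inv C ** C) ** G ** (A ** B ** C)"
          unfolding phi_def by (simp add: matrix_mul_assoc)
        then show ?thesis using CC by simp
      qed
      show "G \<in> phi -` Xs" unfolding Xs_def using 1 2 e G(3) by simp
    qed
    show "phi -` Xs \<subseteq> gen_inv {1,2,4} (A ** B ** C)"
    proof
      fix G assume "G \<in> phi -` Xs"
      then have X: "B ** phi G ** B = B" "phi G ** B ** phi G = phi G"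
        "cstar (matrix_inv C ** phi G ** B ** C) = matrix_inv C ** phi G ** B ** C"
        unfolding Xs_def by auto
      have 1: "A ** B ** C ** G ** (A ** B ** C) = A ** B ** C"
      proof -
        have "A ** B ** C ** G ** (A ** B ** C) = A ** (B ** phi G ** B) ** C"
          unfolding phi_def by (simp add: matrix_mul_assoc)
        then show ?thesis using X(1) by (simp add: matrix_mul_assoc)
      qed
      have 2: "G ** (A ** B ** C) ** G = G"
      proof -
        have "Ci ** (phi G ** B ** phi G) ** Ai = (Ci ** C) ** (G ** (A ** B ** C) ** G) ** (A ** Ai)"
          unfolding phi_def by (simp add: matrix_mul_assoc)
        then have "G ** (A ** B ** C) ** G = Ci ** (phi G ** B ** phi G) ** Ai"
          using AA CC unfolding Ai_def Ci_def by simp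
        then show ?thesis using X(2) gphi[of G] by simp
      qed
      have e: "matrix_inv C ** phi G ** B ** C = G ** (A ** B ** C)"
      proof -
        have "matrix_inv C ** phi G ** B ** C = (matrix_inv C ** C) ** G ** (A ** B ** C)"
          unfolding phi_def by (simp add: matrix_mul_assoc)
        then show ?thesis using CC by simp
      qed
      show "G \<in> gen_inv {1,2,4} (A ** B ** C)" unfolding gen_inv_def using 1 2 e X(3) by auto
    qed
  qed
  have MP: "matrix_inv C ** moore_penrose B ** matrix_inv A \<in> gen_inv {1,2,4} (A ** B ** C) \<longleftrightarrow> D \<in> Xs"
    unfolding T2 using phig[of "moore_penrose B"] unfolding D_def Ci_def Ai_def by simp
  note sv = surj_vimage[of phi "\<lambda>y. Ci ** y ** Ai", OF phig]
  have sub: "(gen_inv {1,2,4} (A ** B ** C) \<subseteq> tri_set A S B C) \<longleftrightarrow> Xs \<subseteq> gen_inv S B" for S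
    unfolding T1 T2 by (rule sv(1))
  have sup: "(tri_set A S B C \<subseteq> gen_inv {1,2,4} (A ** B ** C)) \<longleftrightarrow> gen_inv S B \<subseteq> Xs" for S
    unfolding T1 T2 by (rule sv(1))
  have eqv: "(gen_inv {1,2,4} (A ** B ** C) = tri_set A S B C) \<longleftrightarrow> Xs = gen_inv S B" for S
    unfolding T1 T2 by (rule sv(2))
  have int: "(gen_inv {1,2,4} (A ** B ** C) \<inter> tri_set A S B C \<noteq> {}) \<longleftrightarrow> Xs \<inter> gen_inv S B \<noteq> {}" for S
    unfolding T1 T2 by (rule sv(3))
  have rn: "rank B = CARD('n) \<longleftrightarrow> LI" unfolding LI_def by (rule rank_LI)
  have rm: "rank B = CARD('m) \<longleftrightarrow> RI" unfolding RI_def by (rule rank_RI)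
  have rmin: "rank B = min CARD('m) CARD('n) \<longleftrightarrow> LI \<or> RI"
    using rn rm rank_le_n[of B] rank_le_m[of B] by linarith
  have rmn: "(rank B = CARD('m) \<and> CARD('m) = CARD('n)) \<longleftrightarrow> LI \<and> RI"
    using rn rm by auto
  have rmn': "(RI \<and> CARD('m) = CARD('n)) \<longleftrightarrow> LI \<and> RI"
    using rn rm by auto
  have R2e: "(colspace (C ** cstar C ** cstar B) = colspace (cstar B)) \<longleftrightarrow> R2"
    unfolding R2_def ..
  have se: "\<And>X Y :: (complex^'m^'n) set. (X = Y) \<longleftrightarrow> (X \<subseteq> Y \<and> Y \<subseteq> X)" by blast
  have T: "P = True" if "P" for P using that by simp
  show ?thesis
    unfolding sub sup eqv int MP rmn rmin rn rm R2e
    apply (simp only: T[OF Xs_sub1(1)] T[OF Xs_sub1(2)] T[OF c43a(1)] T[OF c43a(2)]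
        c41 s1 c42 s12 c43b c43c eq13 int14 c44b sup14 c44d c45b c45c eq123 c46 c47a c47b c47c eq134 c48)
    by (simp add: rmn')
qed

end
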